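(* Let $\mathcal{F}\times\Theta$ be a class of pairs $(f^*,\boldsymbol{\theta})$ indexing distributions $\mathbf{P}_{(f^*,\boldsymbol{\theta})}$ as described in the context, and assume that for every $(f^*,\boldsymbol{\theta})\in\mathcal{F}\times\Theta$ the measures $\nu^*_s=\mathrm{Law}(f^*(\boldsymbol{X},S)\mid S=s)$, $s\in[K]$, are non-atomic with finite second moments. Fix $t\in(0,1)$ and let $\delta_n=\delta_n(\mathcal{F},\Theta,t)>0$ satisfy $$\inf_{\hat f}\sup_{(f^*,\boldsymbol{\theta})\in\mathcal{F}\times\Theta}\mathbf{P}_{(f^*,\boldsymbol{\theta})}\big(\mathcal{R}(\hat f)\ge\delta_n\big)\ge t,$$ where the infimum is over all estimators. Then for every $\alpha\in[0,1]$ and $t'\in(0,1)$, $$\inf_{\hat f\in\widehat{\mathcal{F}}_{(\alpha,t')}}\sup_{(f^*,\boldsymbol{\theta})\in\mathcal{F}\times\Theta}\mathbf{P}_{(f^*,\boldsymbol{\theta})}\Big(\mathcal{R}^{1/2}(\hat f)\ge\delta_n^{1/2}\vee(1-\sqrt{\alpha})\,\mathcal{U}^{1/2}(f^* )\Big)\ge t\wedge(1-t').$$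
   Context: Setting: for each $(f^*,\boldsymbol{\theta})\in\mathcal{F}\times\Theta$, $f^*:\mathbb{R}^p\times[K]\to\mathbb{R}$ is a regression function and $\boldsymbol{\theta}$ a nuisance parameter; together they determine the joint distribution of a random triple $(\boldsymbol{X},S,Y)\in\mathbb{R}^p\times[K]\times\mathbb{R}$ with $Y=f^*(\boldsymbol{X},S)+\xi$, $\mathbb{E}[\xi\mid\boldsymbol{X}]=0$, and $\mathbf{P}_{(f^*,\boldsymbol{\theta})}$ is the joint law of an i.i.d. sample of size $n$ from it. An estimator $\hat f$ is a measurable map from the sample to measurable functions $\mathbb{R}^p\times[K]\to\mathbb{R}$. Fix $\boldsymbol{w}\in\Delta^{K-1}$. For a prediction $f$ (evaluated with the sample fixed), with respect to the distribution indexed by $(f^*,\boldsymbol\theta)$: $\mathcal{R}(f)=\sum_{s}w_s\mathbb{E}[(f(\boldsymbol{X},S)-f^*(\boldsymbol{X},S))^2\mid S=s]$ and $\mathcal{U}(f)=\min_{\nu\in\mathcal{P}_2(\mathbb{R})}\sum_s w_s\mathsf{W}_2^2(\mathrm{Law}(f(\boldsymbol{X},S)\mid S=s),\nu)$ ($\mathsf{W}_2$ the Wasserstein-2 distance, $\mathcal{P}_2(\mathbb{R})$ probability measures with finite second moment). An estimator $\hat f$ is $(\alpha,t')$-valid if $\inf_{(f^*,\boldsymbol{\theta})\in\mathcal{F}\times\Theta}\mathbf{P}_{(f^*,\boldsymbol{\theta})}(\mathcal{U}(\hat f)\le\alpha\,\mathcal{U}(f^* ))\ge1-t'$; $\widehat{\mathcal{F}}_{(\alpha,t')}$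 is the set of all such estimators. $a\vee b=\max$, $a\wedge b=\min$. *)

theory Defs
  imports "HOL-Probability.Probability"
begin

type_synonym 'p obs = "((real^'p) \<times> nat) \<times> real"

definition obs_space :: "nat \<Rightarrow> 'p::finite obs measure" where
  "obs_space K = (borel \<Otimes>\<^sub>M count_space {1..K}) \<Otimes>\<^sub>M borel"

definition Xof :: "'p obs \<Rightarrow> real^'p" where "Xof z = fst (fst z)"
definition Sof :: "'p obs \<Rightarrow> nat" where "Sof z = snd (fst z)"
definition Yof :: "'p obs \<Rightarrow> real" where "Yof z = snd z"

definition condXS :: "nat \<Rightarrow> 'p::finite obs measure \<Rightarrow> nat \<Rightarrow> ((real^'p) \<times> nat) measure" where
  "condXS K D s = density (distr D (borel \<Otimes>\<^sub>M count_space {1..K}) fst)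
      (\<lambda>z. indicator {z. snd z = s} z / emeasure D {\<omega> \<in> space D. Sof \<omega> = s})"

definition cond_law :: "nat \<Rightarrow> 'p::finite obs measure \<Rightarrow> (real^'p \<Rightarrow> nat \<Rightarrow> real) \<Rightarrow> nat \<Rightarrow> real measure" where
  "cond_law K D f s = distr (condXS K D s) borel (\<lambda>z. f (fst z) (snd z))"

definition risk :: "nat \<Rightarrow> (nat \<Rightarrow> real) \<Rightarrow> 'p::finite obs measure \<Rightarrow> (real^'p \<Rightarrow> nat \<Rightarrow> real)
    \<Rightarrow> (real^'p \<Rightarrow> nat \<Rightarrow> real) \<Rightarrow> ennreal" where
  "risk K w D fstar f = (\<Sum>s\<in>{1..K}. ennreal (w s) *
      (\<integral>\<^sup>+ z. ennreal ((f (fst z) (snd z) - fstar (fst z) (snd z))\<^sup>2) \<partial>condXS K D s))"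

definition couplings :: "real measure \<Rightarrow> real measure \<Rightarrow> (real \<times> real) measure set" where
  "couplings \<mu> \<nu> = {\<pi>. sets \<pi> = sets (borel \<Otimes>\<^sub>M borel) \<and>
      distr \<pi> borel fst = \<mu> \<and> distr \<pi> borel snd = \<nu>}"

definition W2sq :: "real measure \<Rightarrow> real measure \<Rightarrow> ennreal" where
  "W2sq \<mu> \<nu> = (INF \<pi>\<in>couplings \<mu> \<nu>. \<integral>\<^sup>+ xy. ennreal ((fst xy - snd xy)\<^sup>2) \<partial>\<pi>)"

definition P2 :: "real measure set" where
  "P2 = {\<nu>. prob_space \<nu> \<and> sets \<nu> = sets (borel :: real measure) \<and>
      (\<integral>\<^sup>+ x. ennreal (x\<^sup>2) \<partial>\<nu>) < \<top>}"

definition unfairness :: "nat \<Rightarrow> (nat \<Rightarrow> real) \<Rightarrow> 'p::finite obs measure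
    \<Rightarrow> (real^'p \<Rightarrow> nat \<Rightarrow> real) \<Rightarrow> ennreal" where
  "unfairness K w D f = (INF \<nu>\<in>P2. \<Sum>s\<in>{1..K}. ennreal (w s) * W2sq (cond_law K D f s) \<nu>)"

definition sample_law :: "nat \<Rightarrow> 'p::finite obs measure \<Rightarrow> (nat \<Rightarrow> 'p obs) measure" where
  "sample_law n D = PiM {..<n} (\<lambda>_. D)"

definition estimators :: "nat \<Rightarrow> nat \<Rightarrow> ((nat \<Rightarrow> 'p::finite obs) \<Rightarrow> real^'p \<Rightarrow> nat \<Rightarrow> real) set" where
  "estimators K n = {fh. (\<lambda>(\<omega>, z). fh \<omega> (fst z) (snd z)) \<in>
      borel_measurable (PiM {..<n} (\<lambda>_. obs_space K) \<Otimes>\<^sub>M (borel \<Otimes>\<^sub>M count_space {1..K}))}"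

definition valid_estimators :: "nat \<Rightarrow> (nat \<Rightarrow> real) \<Rightarrow> nat
    \<Rightarrow> (real^'p \<Rightarrow> nat \<Rightarrow> real) set \<Rightarrow> 'th set
    \<Rightarrow> ((real^'p \<Rightarrow> nat \<Rightarrow> real) \<Rightarrow> 'th \<Rightarrow> 'p::finite obs measure)
    \<Rightarrow> real \<Rightarrow> real \<Rightarrow> ((nat \<Rightarrow> 'p obs) \<Rightarrow> real^'p \<Rightarrow> nat \<Rightarrow> real) set" where
  "valid_estimators K w n F \<Theta> D \<alpha> t' = {fh \<in> estimators K n.
      (INF (fstar, \<theta>)\<in>F \<times> \<Theta>. emeasure (sample_law n (D fstar \<theta>))
         {\<omega> \<in> space (sample_law n (D fstar \<theta>)).
            unfairness K w (D fstar \<theta>) (fh \<omega>) \<le> ennreal \<alpha> * unfairness K w (D fstar \<theta>) fstar})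
      \<ge> ennreal (1 - t')}"

definition ennsqrt :: "ennreal \<Rightarrow> ennreal" where
  "ennsqrt x = (if x = \<top> then \<top> else ennreal (sqrt (enn2real x)))"

end

theory Submission
  imports Defs
begin

definition Omega :: "real measure" where "Omega = restrict_space lborel {0<..<1}"
definition qf :: "real measure \<Rightarrow> real \<Rightarrow> real" where "qf M u = Inf {x. u \<le> cdf M x}"

lemma prob_Omega: "prob_space Omega"
  unfolding Omega_def
  by (auto simp add: emeasure_restrict_space space_restrict_space intro!: prob_spaceI)

lemma sets_Omega: "sets Omega = sets (restrict_space borel {0<..<1::real})"
  unfolding Omega_def by (simp add: sets_restrict_space)

lemma space_Omega: "space Omega = {0<..<1}"
  unfolding Omega_def by (simp add: space_restrict_space)

lemma qf_meas[measurable]: "real_distribution M \<Longrightarrow> qf M \<in> borel_measurable Omega"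
proof -
  assume "real_distribution M"
  then interpret cdf_distribution M by (simp add: cdf_distribution_def)
  have "(\<lambda>u. Inf {x. u \<le> cdf M x}) \<in> borel_measurable (restrict_space borel {0<..<1})"
    by (rule measurable_CI)
  then show ?thesis unfolding qf_def[abs_def]
    using measurable_cong_sets[OF sets_Omega refl] by blast
qed

lemma qf_iff: "real_distribution M \<Longrightarrow> 0 < u \<Longrightarrow> u < 1 \<Longrightarrow> qf M u \<le> x \<longleftrightarrow> u \<le> cdf M x"
proof -
  assume "real_distribution M" "0 < u" "u < 1"
  then interpret cdf_distribution M by (simp add: cdf_distribution_def)
  show ?thesis unfolding qf_def using pseudoinverse[OF \<open>0 < u\<close> \<open>u < 1\<close>] by blast
qed

lemma qf_distr: "real_distribution M \<Longrightarrow> distr Omega borel (qf M) = M"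
proof -
  assume "real_distribution M"
  then interpret cdf_distribution M by (simp add: cdf_distribution_def)
  show ?thesis unfolding qf_def[abs_def] Omega_def by (rule distr_I_eq_M)
qed

lemma ind_integral: "(\<integral>\<^sup>+s. indicator {min x y..<max x y} s \<partial>lborel) = ennreal \<bar>x - y\<bar>"
  by (simp add: max_def min_def)

lemma layer:
  fixes X Y :: "'a \<Rightarrow> real"
  assumes sf: "sigma_finite_measure M" and [measurable]: "X \<in> borel_measurable M" "Y \<in> borel_measurable M"
  shows "(\<integral>\<^sup>+z. ennreal ((X z - Y z)\<^sup>2) \<partial>M) =
    (\<integral>\<^sup>+s. \<integral>\<^sup>+t. emeasure M {z\<in>space M. min (X z) (Y z) \<le> min s t \<and> max s t < max (X z) (Y z)} \<partial>lborel \<partial>lborel)"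
proof -
  interpret sigma_finite_measure M by fact
  interpret pair_sigma_finite M lborel by unfold_locales
  define f where "f z s t = (if min (X z) (Y z) \<le> min s t \<and> max s t < max (X z) (Y z) then 1 else 0 :: ennreal)" for z s t
  have [measurable]: "(\<lambda>(z, s). \<integral>\<^sup>+ t. f z s t \<partial>lborel) \<in> borel_measurable (M \<Otimes>\<^sub>M lborel)"
    unfolding f_def by measurable
  have fm2: "\<And>s. (\<lambda>(z, t). f z s t) \<in> borel_measurable (M \<Otimes>\<^sub>M lborel)"
    unfolding f_def by measurable
  have "\<And>z. ennreal ((X z - Y z)\<^sup>2) = (\<integral>\<^sup>+s. \<integral>\<^sup>+t. f z s t \<partial>lborel \<partial>lborel)"
  proof -
    fix z
    have "ennreal ((X z - Y z)\<^sup>2) = ennreal \<bar>X z - Y z\<bar> * ennreal \<bar>X z - Y z\<bar>"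
      by (simp add: ennreal_mult'[symmetric] power2_eq_square)
    also have "\<dots> = (\<integral>\<^sup>+s. indicator {min (X z) (Y z)..<max (X z) (Y z)} s * ennreal \<bar>X z - Y z\<bar> \<partial>lborel)"
      by (simp add: nn_integral_multc ind_integral)
    also have "\<dots> = (\<integral>\<^sup>+s. \<integral>\<^sup>+t. indicator {min (X z) (Y z)..<max (X z) (Y z)} s * indicator {min (X z) (Y z)..<max (X z) (Y z)} t \<partial>lborel \<partial>lborel)"
      by (simp add: nn_integral_cmult ind_integral)
    also have "\<dots> = (\<integral>\<^sup>+s. \<integral>\<^sup>+t. f z s t \<partial>lborel \<partial>lborel)"
      by (intro nn_integral_cong) (auto simp: f_def indicator_def)
    finally show "ennreal ((X z - Y z)\<^sup>2) = (\<integral>\<^sup>+s. \<integral>\<^sup>+t. f z s t \<partial>lborel \<partial>lborel)" .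
  qed
  then have "(\<integral>\<^sup>+z. ennreal ((X z - Y z)\<^sup>2) \<partial>M) = (\<integral>\<^sup>+z. \<integral>\<^sup>+s. \<integral>\<^sup>+t. f z s t \<partial>lborel \<partial>lborel \<partial>M)"
    by simp
  also have "\<dots> = (\<integral>\<^sup>+s. \<integral>\<^sup>+z. \<integral>\<^sup>+t. f z s t \<partial>lborel \<partial>M \<partial>lborel)"
    by (rule Fubini'[symmetric]) measurable
  also have "\<dots> = (\<integral>\<^sup>+s. \<integral>\<^sup>+t. \<integral>\<^sup>+z. f z s t \<partial>M \<partial>lborel \<partial>lborel)"
    by (intro nn_integral_cong Fubini'[symmetric] fm2)
  also have "\<dots> = (\<integral>\<^sup>+s. \<integral>\<^sup>+t. emeasure M {z\<in>space M. min (X z) (Y z) \<le> min s t \<and> max s t < max (X z) (Y z)} \<partial>lborel \<partial>lborel)"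
    proof (intro nn_integral_cong)
    fix s t
    have "(\<integral>\<^sup>+z. f z s t \<partial>M) = (\<integral>\<^sup>+z. indicator {z\<in>space M. min (X z) (Y z) \<le> min s t \<and> max s t < max (X z) (Y z)} z \<partial>M)"
      by (intro nn_integral_cong) (auto simp: f_def indicator_def)
    also have "\<dots> = emeasure M {z\<in>space M. min (X z) (Y z) \<le> min s t \<and> max s t < max (X z) (Y z)}"
      by (intro nn_integral_indicator) measurable
    finally show "(\<integral>\<^sup>+z. f z s t \<partial>M) = emeasure M {z\<in>space M. min (X z) (Y z) \<le> min s t \<and> max s t < max (X z) (Y z)}" .
  qed
  finally show ?thesis .
qed

lemma emeasure_lborel_Ioc_any: "emeasure lborel {a<..b::real} = ennreal (b - a)"
  by (cases "a \<le> b") (auto simp: ennreal_neg)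

lemma coupling_prob:
  assumes "\<pi> \<in> couplings \<mu> \<nu>" "prob_space \<mu>"
  shows "prob_space \<pi>"
proof -
  have s: "sets \<pi> = sets (borel \<Otimes>\<^sub>M borel)" and d: "distr \<pi> borel fst = \<mu>"
    using assms(1) by (auto simp: couplings_def)
  have fm: "fst \<in> measurable \<pi> borel"
    by (subst measurable_cong_sets[OF s refl]) simp
  have "emeasure \<pi> (space \<pi>) = emeasure (distr \<pi> borel fst) UNIV"
    using fm by (simp add: emeasure_distr)
  also have "\<dots> = 1" using d assms(2) prob_space.emeasure_space_1[OF assms(2)]
    by (metis space_distr space_borel)
  finally show ?thesis by (rule prob_spaceI)
qed

lemma coupling_meas:
  assumes "\<pi> \<in> couplings \<mu> \<nu>"
  shows "fst \<in> borel_measurable \<pi>" "snd \<in> borel_measurable \<pi>"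
  using assms by (auto simp: couplings_def measurable_cong_sets[of \<pi> "borel \<Otimes>\<^sub>M borel" borel borel])

lemma coupling_cdf:
  assumes "\<pi> \<in> couplings \<mu> \<nu>"
  shows "measure \<pi> {z\<in>space \<pi>. fst z \<le> a} = cdf \<mu> a" "measure \<pi> {z\<in>space \<pi>. snd z \<le> a} = cdf \<nu> a"
proof -
  have d: "distr \<pi> borel fst = \<mu>" "distr \<pi> borel snd = \<nu>" using assms by (auto simp: couplings_def)
  note m = coupling_meas[OF assms]
  have "cdf \<mu> a = measure (distr \<pi> borel fst) {..a}" using d by (simp only: cdf_def)
  also have "\<dots> = measure \<pi> (fst -` {..a} \<inter> space \<pi>)" using m by (intro measure_distr) auto
  also have "fst -` {..a} \<inter> space \<pi> = {z\<in>space \<pi>. fst z \<le> a}" by auto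
  finally show "measure \<pi> {z\<in>space \<pi>. fst z \<le> a} = cdf \<mu> a" by simp
  have "cdf \<nu> a = measure (distr \<pi> borel snd) {..a}" using d by (simp only: cdf_def)
  also have "\<dots> = measure \<pi> (snd -` {..a} \<inter> space \<pi>)" using m by (intro measure_distr) auto
  also have "snd -` {..a} \<inter> space \<pi> = {z\<in>space \<pi>. snd z \<le> a}" by auto
  finally show "measure \<pi> {z\<in>space \<pi>. snd z \<le> a} = cdf \<nu> a" by simp
qed

lemma cross_bound:
  fixes X Y :: "'a \<Rightarrow> real"
  assumes P: "prob_space P" and [measurable]: "X \<in> borel_measurable P" "Y \<in> borel_measurable P"
  shows "ennreal (measure P {z\<in>space P. X z \<le> a} - measure P {z\<in>space P. Y z \<le> b})
     \<le> emeasure P {z\<in>space P. X z \<le> a \<and> b < Y z}"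
proof -
  interpret prob_space P by fact
  have "{z\<in>space P. X z \<le> a} \<subseteq> {z\<in>space P. X z \<le> a \<and> b < Y z} \<union> {z\<in>space P. Y z \<le> b}"
    by auto
  then have "measure P {z\<in>space P. X z \<le> a} \<le> measure P ({z\<in>space P. X z \<le> a \<and> b < Y z} \<union> {z\<in>space P. Y z \<le> b})"
    by (intro finite_measure_mono) auto
  also have "\<dots> \<le> measure P {z\<in>space P. X z \<le> a \<and> b < Y z} + measure P {z\<in>space P. Y z \<le> b}"
    by (intro measure_Un_le) auto
  finally show ?thesis
    by (simp add: emeasure_eq_measure ennreal_leI)
qed

lemma omega_bound:
  assumes "real_distribution \<mu>" "real_distribution \<nu>"
  shows "emeasure Omega {u\<in>space Omega. qf \<mu> u \<le> a \<and> b < qf \<nu> u} \<le> ennreal (cdf \<mu> a - cdf \<nu> b)"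
proof -
  have sub: "{u\<in>space Omega. qf \<mu> u \<le> a \<and> b < qf \<nu> u} \<subseteq> {0<..<1}"
    by (auto simp: space_Omega)
  have "emeasure Omega {u\<in>space Omega. qf \<mu> u \<le> a \<and> b < qf \<nu> u}
      = emeasure lborel {u\<in>space Omega. qf \<mu> u \<le> a \<and> b < qf \<nu> u}"
    unfolding Omega_def using sub by (subst emeasure_restrict_space) (auto simp: space_restrict_space)
  also have "\<dots> \<le> emeasure lborel {cdf \<nu> b<..cdf \<mu> a}"
  proof (intro emeasure_mono)
    show "{u\<in>space Omega. qf \<mu> u \<le> a \<and> b < qf \<nu> u} \<subseteq> {cdf \<nu> b<..cdf \<mu> a}"
    proof
      fix u assume u: "u \<in> {u\<in>space Omega. qf \<mu> u \<le> a \<and> b < qf \<nu> u}"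
      then have u01: "0 < u" "u < 1" by (auto simp: space_Omega)
      show "u \<in> {cdf \<nu> b<..cdf \<mu> a}"
        using u qf_iff[OF assms(1) u01, of a] qf_iff[OF assms(2) u01, of b] by auto
    qed
  qed simp
  also have "\<dots> = ennreal (cdf \<mu> a - cdf \<nu> b)" by (rule emeasure_lborel_Ioc_any)
  finally show ?thesis .
qed

lemma W2_lower:
  assumes mu: "real_distribution \<mu>" and nu: "real_distribution \<nu>" and pi: "\<pi> \<in> couplings \<mu> \<nu>"
  shows "(\<integral>\<^sup>+u. ennreal ((qf \<mu> u - qf \<nu> u)\<^sup>2) \<partial>Omega) \<le> (\<integral>\<^sup>+xy. ennreal ((fst xy - snd xy)\<^sup>2) \<partial>\<pi>)"
proof -
  have pp: "prob_space \<pi>" using coupling_prob[OF pi] mu by (auto simp: real_distribution_def)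
  note pm[measurable] = coupling_meas[OF pi]
  have qm[measurable]: "qf \<mu> \<in> borel_measurable Omega" "qf \<nu> \<in> borel_measurable Omega"
    using qf_meas mu nu by auto
  have sfO: "sigma_finite_measure Omega"
    using prob_Omega by (simp add: prob_space_imp_sigma_finite)
  have sfp: "sigma_finite_measure \<pi>"
    using pp by (simp add: prob_space_imp_sigma_finite)
  have "(\<integral>\<^sup>+u. ennreal ((qf \<mu> u - qf \<nu> u)\<^sup>2) \<partial>Omega) = (\<integral>\<^sup>+s. \<integral>\<^sup>+t. emeasure Omega {z\<in>space Omega. min (qf \<mu> z) (qf \<nu> z) \<le> min s t \<and> max s t < max (qf \<mu> z) (qf \<nu> z)} \<partial>lborel \<partial>lborel)"
    by (rule layer[OF sfO qm])
  also have "\<dots> \<le> (\<integral>\<^sup>+s. \<integral>\<^sup>+t. emeasure \<pi> {z\<in>space \<pi>. min (fst z) (snd z) \<le> min s t \<and> max s t < max (fst z) (snd z)} \<partial>lborel \<partial>lborel)"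
  proof (intro nn_integral_mono)
    fix s t :: real
    define m where "m = min s t"
    define M where "M = max s t"
    have mM: "m \<le> M" unfolding m_def M_def by simp
    let ?S = "{z\<in>space Omega. min (qf \<mu> z) (qf \<nu> z) \<le> m \<and> M < max (qf \<mu> z) (qf \<nu> z)}"
    let ?S1 = "{z\<in>space Omega. qf \<mu> z \<le> m \<and> M < qf \<nu> z}"
    let ?S2 = "{z\<in>space Omega. qf \<nu> z \<le> m \<and> M < qf \<mu> z}"
    let ?C = "{z\<in>space \<pi>. min (fst z) (snd z) \<le> m \<and> M < max (fst z) (snd z)}"
    let ?C1 = "{z\<in>space \<pi>. fst z \<le> m \<and> M < snd z}"
    let ?C2 = "{z\<in>space \<pi>. snd z \<le> m \<and> M < fst z}"
    have "emeasure Omega ?S \<le> emeasure Omega (?S1 \<union> ?S2)"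
      by (intro emeasure_mono) (use mM in auto)
    also have "\<dots> \<le> emeasure Omega ?S1 + emeasure Omega ?S2"
      by (intro emeasure_subadditive) measurable
    also have "\<dots> \<le> ennreal (cdf \<mu> m - cdf \<nu> M) + ennreal (cdf \<nu> m - cdf \<mu> M)"
      by (intro add_mono omega_bound mu nu)
    also have "\<dots> \<le> emeasure \<pi> ?C1 + emeasure \<pi> ?C2"
      using cross_bound[OF pp pm(1) pm(2), of m M] cross_bound[OF pp pm(2) pm(1), of m M]
      by (intro add_mono) (simp_all add: coupling_cdf[OF pi])
    also have "\<dots> = emeasure \<pi> (?C1 \<union> ?C2)"
      by (intro plus_emeasure) (use mM in auto)
    also have "?C1 \<union> ?C2 = ?C"
      using mM by auto
    finally show "emeasure Omega {z\<in>space Omega. min (qf \<mu> z) (qf \<nu> z) \<le> min s t \<and> max s t < max (qf \<mu> z) (qf \<nu> z)}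
       \<le> emeasure \<pi> {z\<in>space \<pi>. min (fst z) (snd z) \<le> min s t \<and> max s t < max (fst z) (snd z)}"
      unfolding m_def M_def .
  qed
  also have "\<dots> = (\<integral>\<^sup>+xy. ennreal ((fst xy - snd xy)\<^sup>2) \<partial>\<pi>)"
    by (rule layer[OF sfp pm, symmetric])
  finally show ?thesis .
qed

lemma W2_eq:
  assumes mu: "real_distribution \<mu>" and nu: "real_distribution \<nu>"
  shows "W2sq \<mu> \<nu> = (\<integral>\<^sup>+u. ennreal ((qf \<mu> u - qf \<nu> u)\<^sup>2) \<partial>Omega)"
proof (rule antisym)
  have qm[measurable]: "qf \<mu> \<in> borel_measurable Omega" "qf \<nu> \<in> borel_measurable Omega"
    using qf_meas mu nu by auto
  define \<pi> where "\<pi> = distr Omega (borel \<Otimes>\<^sub>M borel) (\<lambda>u. (qf \<mu> u, qf \<nu> u))"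
  have gm[measurable]: "(\<lambda>u. (qf \<mu> u, qf \<nu> u)) \<in> measurable Omega (borel \<Otimes>\<^sub>M borel)" by measurable
  have "distr \<pi> borel fst = distr Omega borel (fst \<circ> (\<lambda>u. (qf \<mu> u, qf \<nu> u)))"
    unfolding \<pi>_def by (rule distr_distr) measurable
  also have "\<dots> = \<mu>" using qf_distr[OF mu] by (simp add: comp_def)
  finally have d1: "distr \<pi> borel fst = \<mu>" .
  have "distr \<pi> borel snd = distr Omega borel (snd \<circ> (\<lambda>u. (qf \<mu> u, qf \<nu> u)))"
    unfolding \<pi>_def by (rule distr_distr) measurable
  also have "\<dots> = \<nu>" using qf_distr[OF nu] by (simp add: comp_def)
  finally have d2: "distr \<pi> borel snd = \<nu>" .
  have pc: "\<pi> \<in> couplings \<mu> \<nu>" unfolding couplings_def using d1 d2 by (simp add: \<pi>_def)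
  have "W2sq \<mu> \<nu> \<le> (\<integral>\<^sup>+xy. ennreal ((fst xy - snd xy)\<^sup>2) \<partial>\<pi>)"
    unfolding W2sq_def using pc by (rule INF_lower)
  also have "\<dots> = (\<integral>\<^sup>+u. ennreal ((qf \<mu> u - qf \<nu> u)\<^sup>2) \<partial>Omega)"
    unfolding \<pi>_def by (subst nn_integral_distr) auto
  finally show "W2sq \<mu> \<nu> \<le> (\<integral>\<^sup>+u. ennreal ((qf \<mu> u - qf \<nu> u)\<^sup>2) \<partial>Omega)" .
  show "(\<integral>\<^sup>+u. ennreal ((qf \<mu> u - qf \<nu> u)\<^sup>2) \<partial>Omega) \<le> W2sq \<mu> \<nu>"
    unfolding W2sq_def by (intro INF_greatest W2_lower mu nu)
qed

lemma sq_tri: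
  fixes a b c r :: real
  assumes "0 < r" "r < 1"
  shows "(a - c)\<^sup>2 \<le> (1 / (1 - r)) * (a - b)\<^sup>2 + (1 / r) * (b - c)\<^sup>2"
proof -
  have h: "r * (1 - r) * (a - c)\<^sup>2 \<le> r * (a - b)\<^sup>2 + (1 - r) * (b - c)\<^sup>2"
  proof -
    have "r * (a - b)\<^sup>2 + (1 - r) * (b - c)\<^sup>2 - r * (1 - r) * (a - c)\<^sup>2 = (r * (a - b) - (1 - r) * (b - c))\<^sup>2"
      by (simp add: power2_eq_square algebra_simps)
    then show ?thesis by (metis diff_ge_0_iff_ge zero_le_power2)
  qed
  have pos: "r * (1 - r) > 0" using assms by simp
  have "(1 / (1 - r)) * (a - b)\<^sup>2 + (1 / r) * (b - c)\<^sup>2 = (r * (a - b)\<^sup>2 + (1 - r) * (b - c)\<^sup>2) / (r * (1 - r))"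
    using assms by (simp add: field_simps)
  moreover have "(a - c)\<^sup>2 \<le> (r * (a - b)\<^sup>2 + (1 - r) * (b - c)\<^sup>2) / (r * (1 - r))"
    using h pos by (simp add: pos_le_divide_eq mult.commute)
  ultimately show ?thesis by simp
qed

lemma W2_tri:
  assumes mu: "real_distribution \<mu>" and la: "real_distribution la" and nu: "real_distribution \<nu>"
    and r: "0 < r" "r < 1"
  shows "W2sq \<mu> \<nu> \<le> ennreal (1 / (1 - r)) * W2sq \<mu> la + ennreal (1 / r) * W2sq la \<nu>"
proof -
  have qm[measurable]: "qf \<mu> \<in> borel_measurable Omega" "qf \<nu> \<in> borel_measurable Omega" "qf la \<in> borel_measurable Omega"
    using qf_meas mu nu la by auto
  have "W2sq \<mu> \<nu> = (\<integral>\<^sup>+u. ennreal ((qf \<mu> u - qf \<nu> u)\<^sup>2) \<partial>Omega)" by (rule W2_eq[OF mu nu])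
  also have "\<dots> \<le> (\<integral>\<^sup>+u. ennreal (1 / (1 - r)) * ennreal ((qf \<mu> u - qf la u)\<^sup>2) + ennreal (1 / r) * ennreal ((qf la u - qf \<nu> u)\<^sup>2) \<partial>Omega)"
  proof (intro nn_integral_mono)
    fix u
    have "ennreal ((qf \<mu> u - qf \<nu> u)\<^sup>2) \<le> ennreal ((1 / (1 - r)) * (qf \<mu> u - qf la u)\<^sup>2 + (1 / r) * (qf la u - qf \<nu> u)\<^sup>2)"
      by (intro ennreal_leI sq_tri r)
    also have "\<dots> = ennreal (1 / (1 - r)) * ennreal ((qf \<mu> u - qf la u)\<^sup>2) + ennreal (1 / r) * ennreal ((qf la u - qf \<nu> u)\<^sup>2)"
      using r by (simp add: ennreal_plus[symmetric] ennreal_mult[symmetric] del: ennreal_plus)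
    finally show "ennreal ((qf \<mu> u - qf \<nu> u)\<^sup>2) \<le> ennreal (1 / (1 - r)) * ennreal ((qf \<mu> u - qf la u)\<^sup>2) + ennreal (1 / r) * ennreal ((qf la u - qf \<nu> u)\<^sup>2)" .
  qed
  also have "\<dots> = ennreal (1 / (1 - r)) * (\<integral>\<^sup>+u. ennreal ((qf \<mu> u - qf la u)\<^sup>2) \<partial>Omega) + ennreal (1 / r) * (\<integral>\<^sup>+u. ennreal ((qf la u - qf \<nu> u)\<^sup>2) \<partial>Omega)"
    by (simp add: nn_integral_add nn_integral_cmult)
  also have "\<dots> = ennreal (1 / (1 - r)) * W2sq \<mu> la + ennreal (1 / r) * W2sq la \<nu>"
    by (simp add: W2_eq mu nu la)
  finally show ?thesis .
qed

lemma return0_P2: "return borel (0::real) \<in> P2"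
  unfolding P2_def by (auto simp: prob_space_return nn_integral_return)

lemma W2_zero:
  assumes mu: "real_distribution \<mu>"
  shows "W2sq \<mu> (return borel 0) \<le> (\<integral>\<^sup>+x. ennreal (x\<^sup>2) \<partial>\<mu>)"
proof -
  interpret real_distribution \<mu> by fact
  define \<pi> where "\<pi> = distr \<mu> (borel \<Otimes>\<^sub>M borel) (\<lambda>x. (x, 0::real))"
  have sm: "sets \<mu> = sets borel" by simp
  have gm: "(\<lambda>x. (x, 0::real)) \<in> measurable \<mu> (borel \<Otimes>\<^sub>M borel)"
    by (simp add: measurable_cong_sets[OF sm refl])
  have "distr \<pi> borel fst = distr \<mu> borel (fst \<circ> (\<lambda>x. (x, 0::real)))"
    unfolding \<pi>_def by (rule distr_distr) (simp_all add: gm)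
  also have "\<dots> = \<mu>" by (simp add: comp_def distr_id2[OF sm[symmetric]])
  finally have d1: "distr \<pi> borel fst = \<mu>" .
  have "distr \<pi> borel snd = distr \<mu> borel (snd \<circ> (\<lambda>x. (x, 0::real)))"
    unfolding \<pi>_def by (rule distr_distr) (simp_all add: gm)
  also have "\<dots> = return borel 0" by (simp add: comp_def)
  finally have d2: "distr \<pi> borel snd = return borel 0" .
  have pc: "\<pi> \<in> couplings \<mu> (return borel 0)" unfolding couplings_def using d1 d2 by (simp add: \<pi>_def)
  have "W2sq \<mu> (return borel 0) \<le> (\<integral>\<^sup>+xy. ennreal ((fst xy - snd xy)\<^sup>2) \<partial>\<pi>)"
    unfolding W2sq_def using pc by (rule INF_lower)
  also have "\<dots> = (\<integral>\<^sup>+x. ennreal (x\<^sup>2) \<partial>\<mu>)"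
    unfolding \<pi>_def using gm by (subst nn_integral_distr) auto
  finally show ?thesis .
qed

lemma le_INF_aff:
  fixes a b c :: ennreal and g :: "'x \<Rightarrow> ennreal"
  assumes X: "X \<noteq> {}" and c: "c < top" and h: "\<And>x. x \<in> X \<Longrightarrow> a \<le> b + c * g x"
  shows "a \<le> b + c * (INF x\<in>X. g x)"
proof -
  define H where "H y = b + c * y" for y :: ennreal
  have mono: "mono H" unfolding H_def by (intro monoI add_left_mono mult_left_mono) auto
  have co: "continuous_on UNIV H" unfolding H_def
    by (intro continuous_on_add continuous_on_const ennreal_continuous_on_cmult continuous_on_id c)
  have "H (Inf (g ` X)) = (INF s\<in>g ` X. H s)"
    by (rule continuous_at_Inf_mono[OF mono])
       (use co X in \<open>auto intro: continuous_on_imp_continuous_within\<close>)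
  also have "a \<le> (INF s\<in>g ` X. H s)"
    using h by (auto intro!: INF_greatest simp: H_def)
  ultimately show ?thesis unfolding H_def by (simp add: image_image)
qed

lemma sets_condXS: "sets (condXS K D s) = sets (borel \<Otimes>\<^sub>M count_space {1..K})"
  unfolding condXS_def by (simp only: sets_density sets_distr)

lemma meas_condXS:
  assumes "(\<lambda>z. f (fst z) (snd z)) \<in> borel_measurable (borel \<Otimes>\<^sub>M count_space {1..K})"
  shows "(\<lambda>z. f (fst z) (snd z)) \<in> borel_measurable (condXS K D s)"
  using assms by (simp add: measurable_cong_sets[OF sets_condXS refl])

lemma condXS_prob:
  assumes "prob_space (cond_law K D f s)"
    and fm: "(\<lambda>z. f (fst z) (snd z)) \<in> borel_measurable (borel \<Otimes>\<^sub>M count_space {1..K})"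
  shows "prob_space (condXS K D s)"
proof (rule prob_spaceI)
  have "emeasure (condXS K D s) (space (condXS K D s)) = emeasure (cond_law K D f s) UNIV"
    unfolding cond_law_def using meas_condXS[OF fm] by (simp add: emeasure_distr)
  also have "\<dots> = 1" using prob_space.emeasure_space_1[OF assms(1)]
    by (simp add: cond_law_def)
  finally show "emeasure (condXS K D s) (space (condXS K D s)) = 1" .
qed

lemma cond_law_rd:
  assumes "prob_space (condXS K D s)"
    and gm: "(\<lambda>z. g (fst z) (snd z)) \<in> borel_measurable (borel \<Otimes>\<^sub>M count_space {1..K})"
  shows "real_distribution (cond_law K D g s)"
  unfolding cond_law_def real_distribution_def real_distribution_axioms_def
  using prob_space.prob_space_distr[OF assms(1) meas_condXS[OF gm]] by simp

lemma W2_risk: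
  assumes "prob_space (condXS K D s)"
    and fm: "(\<lambda>z. f (fst z) (snd z)) \<in> borel_measurable (borel \<Otimes>\<^sub>M count_space {1..K})"
    and gm: "(\<lambda>z. g (fst z) (snd z)) \<in> borel_measurable (borel \<Otimes>\<^sub>M count_space {1..K})"
  shows "W2sq (cond_law K D f s) (cond_law K D g s)
     \<le> (\<integral>\<^sup>+z. ennreal ((g (fst z) (snd z) - f (fst z) (snd z))\<^sup>2) \<partial>condXS K D s)"
proof -
  note fm' = meas_condXS[OF fm, of D s] and gm' = meas_condXS[OF gm, of D s]
  define \<pi> where "\<pi> = distr (condXS K D s) (borel \<Otimes>\<^sub>M borel) (\<lambda>z. (f (fst z) (snd z), g (fst z) (snd z)))"
  have pm: "(\<lambda>z. (f (fst z) (snd z), g (fst z) (snd z))) \<in> measurable (condXS K D s) (borel \<Otimes>\<^sub>M borel)"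
    using fm' gm' by (rule measurable_Pair)
  have "distr \<pi> borel fst = distr (condXS K D s) borel (fst \<circ> (\<lambda>z. (f (fst z) (snd z), g (fst z) (snd z))))"
    unfolding \<pi>_def by (rule distr_distr) (simp_all add: pm)
  also have "\<dots> = cond_law K D f s" by (simp add: comp_def cond_law_def)
  finally have d1: "distr \<pi> borel fst = cond_law K D f s" .
  have "distr \<pi> borel snd = distr (condXS K D s) borel (snd \<circ> (\<lambda>z. (f (fst z) (snd z), g (fst z) (snd z))))"
    unfolding \<pi>_def by (rule distr_distr) (simp_all add: pm)
  also have "\<dots> = cond_law K D g s" by (simp add: comp_def cond_law_def)
  finally have d2: "distr \<pi> borel snd = cond_law K D g s" .
  have pc: "\<pi> \<in> couplings (cond_law K D f s) (cond_law K D g s)"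
    unfolding couplings_def using d1 d2 by (simp add: \<pi>_def)
  have "W2sq (cond_law K D f s) (cond_law K D g s) \<le> (\<integral>\<^sup>+xy. ennreal ((fst xy - snd xy)\<^sup>2) \<partial>\<pi>)"
    unfolding W2sq_def using pc by (rule INF_lower)
  also have "\<dots> = (\<integral>\<^sup>+z. ennreal ((f (fst z) (snd z) - g (fst z) (snd z))\<^sup>2) \<partial>condXS K D s)"
    unfolding \<pi>_def using pm by (subst nn_integral_distr) auto
  also have "\<dots> = (\<integral>\<^sup>+z. ennreal ((g (fst z) (snd z) - f (fst z) (snd z))\<^sup>2) \<partial>condXS K D s)"
    by (simp add: power2_commute)
  finally show ?thesis .
qed

lemma P2_rd: "\<nu> \<in> P2 \<Longrightarrow> real_distribution \<nu>"
  unfolding P2_def real_distribution_def real_distribution_axioms_def by auto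

lemma U_finite:
  assumes pf: "\<forall>s\<in>{1..K}. prob_space (cond_law K D f s) \<and> (\<integral>\<^sup>+x. ennreal (x\<^sup>2) \<partial>cond_law K D f s) < \<top>"
    and fm: "(\<lambda>z. f (fst z) (snd z)) \<in> borel_measurable (borel \<Otimes>\<^sub>M count_space {1..K})"
  shows "unfairness K w D f < \<top>"
proof -
  have "unfairness K w D f \<le> (\<Sum>s\<in>{1..K}. ennreal (w s) * W2sq (cond_law K D f s) (return borel 0))"
    unfolding unfairness_def using return0_P2 by (rule INF_lower)
  also have "\<dots> \<le> (\<Sum>s\<in>{1..K}. ennreal (w s) * (\<integral>\<^sup>+x. ennreal (x\<^sup>2) \<partial>cond_law K D f s))"
  proof (intro sum_mono mult_left_mono)
    fix s assume s: "s \<in> {1..K}"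
    have "prob_space (condXS K D s)" using condXS_prob pf s fm by blast
    then have "real_distribution (cond_law K D f s)" using cond_law_rd fm by blast
    then show "W2sq (cond_law K D f s) (return borel 0) \<le> (\<integral>\<^sup>+x. ennreal (x\<^sup>2) \<partial>cond_law K D f s)"
      by (rule W2_zero)
  qed simp
  also have "\<dots> < \<top>"
    using pf by (simp add: less_top[symmetric] ennreal_mult_eq_top_iff)
  finally show ?thesis .
qed

lemma key_bound:
  assumes pf: "\<forall>s\<in>{1..K}. prob_space (cond_law K D f s)"
    and fm: "(\<lambda>z. f (fst z) (snd z)) \<in> borel_measurable (borel \<Otimes>\<^sub>M count_space {1..K})"
    and gm: "(\<lambda>z. g (fst z) (snd z)) \<in> borel_measurable (borel \<Otimes>\<^sub>M count_space {1..K})"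
    and r: "0 < r" "r < 1"
  shows "unfairness K w D f \<le> ennreal (1 / (1 - r)) * risk K w D f g + ennreal (1 / r) * unfairness K w D g"
proof -
  have pX: "\<And>s. s \<in> {1..K} \<Longrightarrow> prob_space (condXS K D s)" using condXS_prob pf fm by blast
  have rdf: "\<And>s. s \<in> {1..K} \<Longrightarrow> real_distribution (cond_law K D f s)" using cond_law_rd pX fm by blast
  have rdg: "\<And>s. s \<in> {1..K} \<Longrightarrow> real_distribution (cond_law K D g s)" using cond_law_rd pX gm by blast
  show ?thesis
    unfolding unfairness_def[of K w D g]
  proof (rule le_INF_aff)
    show "P2 \<noteq> {}" using return0_P2 by blast
    show "ennreal (1 / r) < \<top>" by simp
    fix \<nu> assume nu: "\<nu> \<in> P2"
    have rdn: "real_distribution \<nu>" using P2_rd nu .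
    have "unfairness K w D f \<le> (\<Sum>s\<in>{1..K}. ennreal (w s) * W2sq (cond_law K D f s) \<nu>)"
      unfolding unfairness_def using nu by (rule INF_lower)
    also have "\<dots> \<le> (\<Sum>s\<in>{1..K}. ennreal (w s) * (ennreal (1 / (1 - r)) * (\<integral>\<^sup>+z. ennreal ((g (fst z) (snd z) - f (fst z) (snd z))\<^sup>2) \<partial>condXS K D s)
         + ennreal (1 / r) * W2sq (cond_law K D g s) \<nu>))"
    proof (intro sum_mono mult_left_mono)
      fix s assume s: "s \<in> {1..K}"
      have "W2sq (cond_law K D f s) \<nu> \<le> ennreal (1 / (1 - r)) * W2sq (cond_law K D f s) (cond_law K D g s) + ennreal (1 / r) * W2sq (cond_law K D g s) \<nu>"
        by (rule W2_tri[OF rdf[OF s] rdg[OF s] rdn r])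
      also have "\<dots> \<le> ennreal (1 / (1 - r)) * (\<integral>\<^sup>+z. ennreal ((g (fst z) (snd z) - f (fst z) (snd z))\<^sup>2) \<partial>condXS K D s)
         + ennreal (1 / r) * W2sq (cond_law K D g s) \<nu>"
        by (intro add_right_mono mult_left_mono W2_risk[OF pX[OF s] fm gm]) simp
      finally show "W2sq (cond_law K D f s) \<nu> \<le> ennreal (1 / (1 - r)) * (\<integral>\<^sup>+z. ennreal ((g (fst z) (snd z) - f (fst z) (snd z))\<^sup>2) \<partial>condXS K D s)
         + ennreal (1 / r) * W2sq (cond_law K D g s) \<nu>" .
    qed simp
    also have "\<dots> = ennreal (1 / (1 - r)) * risk K w D f g + ennreal (1 / r) * (\<Sum>s\<in>{1..K}. ennreal (w s) * W2sq (cond_law K D g s) \<nu>)"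
      unfolding risk_def by (simp add: distrib_left sum.distrib sum_distrib_left mult.left_commute)
    finally show "unfairness K w D f \<le> ennreal (1 / (1 - r)) * risk K w D f g + ennreal (1 / r) * (\<Sum>s\<in>{1..K}. ennreal (w s) * W2sq (cond_law K D g s) \<nu>)" .
  qed
qed

lemma eps_le: fixes u \<rho> :: real assumes "\<rho> \<ge> 0" "\<And>r. 0 < r \<Longrightarrow> r < 1 \<Longrightarrow> u \<le> \<rho> / (1 - r)"
  shows "u \<le> \<rho>"
proof (rule ccontr)
  assume "\<not> u \<le> \<rho>"
  then have u: "u > \<rho>" by simp
  then have up: "u > 0" using assms(1) by simp
  define r where "r = (u - \<rho>) / (2 * u)"
  have r0: "0 < r" using u up by (simp add: r_def)
  have r1: "r < 1" using u up assms(1) by (simp add: r_def)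
  have "u \<le> \<rho> / (1 - r)" using assms(2)[OF r0 r1] .
  then have "u * (1 - r) \<le> \<rho>" using r1 by (simp add: pos_le_divide_eq)
  moreover have "u * (1 - r) = (u + \<rho>) / 2" using up by (simp add: r_def field_simps)
  ultimately show False using u by simp
qed

lemma ennreal_conv:
  fixes u a b \<rho> x :: real
  assumes "u \<ge> 0" "a \<ge> 0" "b \<ge> 0" "\<rho> \<ge> 0" "x \<ge> 0"
    and "ennreal u \<le> ennreal a * ennreal \<rho> + ennreal b * ennreal x"
  shows "u \<le> a * \<rho> + b * x"
proof -
  have "ennreal a * ennreal \<rho> + ennreal b * ennreal x = ennreal (a * \<rho>) + ennreal (b * x)"
    using assms by (simp add: ennreal_mult[symmetric])
  also have "\<dots> = ennreal (a * \<rho> + b * x)"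
    using assms by (intro ennreal_plus[symmetric]) auto
  finally have "ennreal a * ennreal \<rho> + ennreal b * ennreal x = ennreal (a * \<rho> + b * x)" .
  then have "ennreal u \<le> ennreal (a * \<rho> + b * x)" using assms(6) by (simp only:)
  then show ?thesis using assms by (subst (asm) ennreal_le_iff) auto
qed

lemma final_alg:
  fixes U R X :: ennreal and \<alpha> :: real
  assumes Uf: "U < \<top>" and a: "0 \<le> \<alpha>" "\<alpha> < 1" and X: "X \<le> ennreal \<alpha> * U"
    and h: "\<And>r. 0 < r \<Longrightarrow> r < 1 \<Longrightarrow> U \<le> ennreal (1 / (1 - r)) * R + ennreal (1 / r) * X"
  shows "ennreal (1 - sqrt \<alpha>) * ennsqrt U \<le> ennsqrt R"
proof (cases "R = \<top>")
  case True then show ?thesis by (simp add: ennsqrt_def)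
next
  case False
  obtain \<rho> where \<rho>: "R = ennreal \<rho>" "\<rho> \<ge> 0" using False by (cases R) auto
  obtain u where u: "U = ennreal u" "u \<ge> 0" using Uf by (cases U) auto
  have Xb: "X \<le> ennreal (\<alpha> * u)" using X u a by (simp add: ennreal_mult)
  then have "X < \<top>" using le_less_trans ennreal_less_top by blast
  then obtain x where x: "X = ennreal x" "x \<ge> 0" by (cases X) auto
  have "ennreal x \<le> ennreal (\<alpha> * u)" using Xb x(1) by (simp only:)
  then have xa: "x \<le> \<alpha> * u" using u a ennreal_le_iff[of "\<alpha> * u" x] by auto
  have hr: "u \<le> (1 / (1 - r)) * \<rho> + (1 / r) * x" if "0 < r" "r < 1" for r
    using h[OF that] that u \<rho> x by (intro ennreal_conv) auto
  have key: "(1 - sqrt \<alpha>) * sqrt u \<le> sqrt \<rho>"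
  proof (cases "\<alpha> = 0")
    case True
    then have "x = 0" using xa x by simp
    then have hh: "u \<le> \<rho> / (1 - r)" if "0 < r" "r < 1" for r using hr[OF that] by simp
    have "u \<le> \<rho>" using eps_le[OF \<rho>(2) hh] by blast
    then show ?thesis using True by (simp add: real_sqrt_le_mono)
  next
    case False
    define r where "r = sqrt \<alpha>"
    have r0: "0 < r" using False a by (simp add: r_def)
    have r1: "r < 1" using a by (simp add: r_def)
    have ar: "\<alpha> = r * r" using a by (simp add: r_def)
    have "u \<le> (1 / (1 - r)) * \<rho> + (1 / r) * x" using hr r0 r1 by blast
    also have "(1 / r) * x \<le> (1 / r) * (\<alpha> * u)" using xa r0 by (intro mult_left_mono) auto
    also have "(1 / r) * (\<alpha> * u) = r * u" using r0 ar by (simp add: field_simps)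
    finally have "u * (1 - r) \<le> \<rho> / (1 - r)" by (simp add: algebra_simps)
    then have "u * (1 - r) * (1 - r) \<le> \<rho>" using r1 by (simp add: pos_le_divide_eq)
    then have "((1 - r) * sqrt u)\<^sup>2 \<le> \<rho>" using u by (simp add: power2_eq_square algebra_simps)
    then have "sqrt (((1 - r) * sqrt u)\<^sup>2) \<le> sqrt \<rho>" by (rule real_sqrt_le_mono)
    then show ?thesis using r1 u by (simp add: r_def)
  qed
  have "ennreal (1 - sqrt \<alpha>) * ennsqrt U = ennreal ((1 - sqrt \<alpha>) * sqrt u)"
    using u a by (simp add: ennsqrt_def ennreal_mult)
  also have "\<dots> \<le> ennreal (sqrt \<rho>)" using key by (rule ennreal_leI)
  also have "\<dots> = ennsqrt R" using \<rho> by (simp add: ennsqrt_def)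
  finally show ?thesis .
qed

lemma ennsqrt_ge_iff: "c \<le> ennsqrt x \<longleftrightarrow> c * c \<le> x"
proof (cases "x = \<top>")
  case True then show ?thesis by (simp add: ennsqrt_def)
next
  case False
  then obtain \<xi> where x: "x = ennreal \<xi>" "\<xi> \<ge> 0" by (cases x) auto
  show ?thesis
  proof (cases "c = \<top>")
    case True then show ?thesis using x by (simp add: ennsqrt_def top_unique)
  next
    case False
    then obtain \<gamma> where c: "c = ennreal \<gamma>" "\<gamma> \<ge> 0" by (cases c) auto
    have "c \<le> ennsqrt x \<longleftrightarrow> \<gamma> \<le> sqrt \<xi>" using x c by (simp add: ennsqrt_def)
    also have "\<dots> \<longleftrightarrow> sqrt (\<gamma>\<^sup>2) \<le> sqrt \<xi>" using c by simp
    also have "\<dots> \<longleftrightarrow> \<gamma>\<^sup>2 \<le> \<xi>" by (rule real_sqrt_le_iff)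
    also have "\<dots> \<longleftrightarrow> c * c \<le> x" using x c by (simp add: ennreal_mult[symmetric] power2_eq_square)
    finally show ?thesis .
  qed
qed

lemma ennsqrt_sq: "ennsqrt x * ennsqrt x = x"
proof (cases "x = \<top>")
  case True then show ?thesis by (simp add: ennsqrt_def)
next
  case False
  then obtain \<xi> where x: "x = ennreal \<xi>" "\<xi> \<ge> 0" by (cases x) auto
  then show ?thesis by (simp add: ennsqrt_def ennreal_mult[symmetric])
qed

lemma ennsqrt_le_iff: "ennsqrt y \<le> ennsqrt x \<longleftrightarrow> y \<le> x"
  using ennsqrt_ge_iff[of "ennsqrt y" x] ennsqrt_sq[of y] by simp

lemma param_facts:
  assumes sD: "sets D0 = sets (obs_space K)"
    and fm: "(\<lambda>z. f0 (fst z) (snd z)) \<in> borel_measurable (borel \<Otimes>\<^sub>M count_space {1..K})"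
    and pf: "\<forall>s\<in>{1..K}. prob_space (cond_law K D0 f0 s)"
    and fhe: "fh \<in> estimators K n"
  shows "\<And>\<omega>. \<omega> \<in> space (sample_law n D0) \<Longrightarrow> (\<lambda>z. fh \<omega> (fst z) (snd z)) \<in> borel_measurable (borel \<Otimes>\<^sub>M count_space {1..K})"
    and "(\<lambda>\<omega>. risk K w D0 f0 (fh \<omega>)) \<in> borel_measurable (sample_law n D0)"
proof -
  let ?B = "borel \<Otimes>\<^sub>M count_space {1..K} :: ((real^'a) \<times> nat) measure"
  have HM: "(\<lambda>(\<omega>, z). fh \<omega> (fst z) (snd z)) \<in> borel_measurable (PiM {..<n} (\<lambda>_. obs_space K) \<Otimes>\<^sub>M ?B)"
    using fhe by (simp add: estimators_def)
  have sP: "sets (sample_law n D0) = sets (PiM {..<n} (\<lambda>_. obs_space K))"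
    unfolding sample_law_def by (rule sets_PiM_cong) (auto simp: sD)
  have spP: "space (sample_law n D0) = space (PiM {..<n} (\<lambda>_. obs_space K))"
    using sets_eq_imp_space_eq[OF sP] .
  show "\<And>\<omega>. \<omega> \<in> space (sample_law n D0) \<Longrightarrow> (\<lambda>z. fh \<omega> (fst z) (snd z)) \<in> borel_measurable ?B"
  proof -
    fix \<omega> assume "\<omega> \<in> space (sample_law n D0)"
    then have "\<omega> \<in> space (PiM {..<n} (\<lambda>_. obs_space K))" using spP by simp
    from measurable_Pair2[OF HM this] show "(\<lambda>z. fh \<omega> (fst z) (snd z)) \<in> borel_measurable ?B" by simp
  qed
  have each: "(\<lambda>\<omega>. \<integral>\<^sup>+z. ennreal ((fh \<omega> (fst z) (snd z) - f0 (fst z) (snd z))\<^sup>2) \<partial>condXS K D0 s) \<in> borel_measurable (sample_law n D0)"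
    if s: "s \<in> {1..K}" for s
  proof -
    have pX: "prob_space (condXS K D0 s)" using condXS_prob pf s fm by blast
    then interpret X: sigma_finite_measure "condXS K D0 s" by (simp add: prob_space_imp_sigma_finite)
    have sPX: "sets (sample_law n D0 \<Otimes>\<^sub>M condXS K D0 s) = sets (PiM {..<n} (\<lambda>_. obs_space K) \<Otimes>\<^sub>M ?B)"
      by (rule sets_pair_measure_cong[OF sP sets_condXS])
    define H where "H = (\<lambda>(\<omega>, z). fh \<omega> (fst z) (snd z))"
    define F0 where "F0 = (\<lambda>p :: (nat \<Rightarrow> 'a obs) \<times> ((real^'a) \<times> nat). f0 (fst (snd p)) (snd (snd p)))"
    have [measurable]: "H \<in> borel_measurable (sample_law n D0 \<Otimes>\<^sub>M condXS K D0 s)"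
      unfolding H_def measurable_cong_sets[OF sPX refl] using HM .
    have "(\<lambda>z. f0 (fst z) (snd z)) \<in> borel_measurable (condXS K D0 s)" by (rule meas_condXS[OF fm])
    then have [measurable]: "F0 \<in> borel_measurable (sample_law n D0 \<Otimes>\<^sub>M condXS K D0 s)"
      unfolding F0_def by (rule measurable_compose[OF measurable_snd])
    have m: "(\<lambda>p. ennreal ((H p - F0 p)\<^sup>2)) \<in> borel_measurable (sample_law n D0 \<Otimes>\<^sub>M condXS K D0 s)"
      by measurable
    have "case_prod (\<lambda>\<omega> z. ennreal ((fh \<omega> (fst z) (snd z) - f0 (fst z) (snd z))\<^sup>2)) = (\<lambda>p. ennreal ((H p - F0 p)\<^sup>2))"
      by (auto simp: H_def F0_def fun_eq_iff)
    then have "case_prod (\<lambda>\<omega> z. ennreal ((fh \<omega> (fst z) (snd z) - f0 (fst z) (snd z))\<^sup>2)) \<in> borel_measurable (sample_law n D0 \<Otimes>\<^sub>M condXS K D0 s)"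
      using m by simp
    then show ?thesis by (rule X.borel_measurable_nn_integral)
  qed
  show "(\<lambda>\<omega>. risk K w D0 f0 (fh \<omega>)) \<in> borel_measurable (sample_law n D0)"
    unfolding risk_def
    by (intro borel_measurable_sum borel_measurable_times_ennreal measurable_const each) auto
qed

theorem theorem2:
  fixes K n :: nat and w :: "nat \<Rightarrow> real"
    and F :: "(real^'p::finite \<Rightarrow> nat \<Rightarrow> real) set" and \<Theta> :: "'th set"
    and D :: "(real^'p \<Rightarrow> nat \<Rightarrow> real) \<Rightarrow> 'th \<Rightarrow> 'p obs measure"
    and t \<delta> :: real
  assumes K: "K \<ge> 1"
    and w_nonneg: "\<forall>s\<in>{1..K}. w s \<ge> 0" and w_sum: "(\<Sum>s\<in>{1..K}. w s) = 1"
    and model: "\<forall>(fstar, \<theta>)\<in>F \<times> \<Theta>.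
        prob_space (D fstar \<theta>) \<and> sets (D fstar \<theta>) = sets (obs_space K) \<and>
        (\<lambda>z. fstar (fst z) (snd z)) \<in> borel_measurable (borel \<Otimes>\<^sub>M count_space {1..K}) \<and>
        integrable (D fstar \<theta>) (\<lambda>\<omega>. Yof \<omega> - fstar (Xof \<omega>) (Sof \<omega>)) \<and>
        (AE \<omega> in D fstar \<theta>. real_cond_exp (D fstar \<theta>)
            (vimage_algebra (space (D fstar \<theta>)) Xof borel)
            (\<lambda>\<omega>. Yof \<omega> - fstar (Xof \<omega>) (Sof \<omega>)) \<omega> = 0)"
    and nonatomic: "\<forall>(fstar, \<theta>)\<in>F \<times> \<Theta>. \<forall>s\<in>{1..K}.
        prob_space (cond_law K (D fstar \<theta>) fstar s) \<and>
        (\<forall>x. emeasure (cond_law K (D fstar \<theta>) fstar s) {x} = 0) \<and>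
        (\<integral>\<^sup>+ x. ennreal (x\<^sup>2) \<partial>cond_law K (D fstar \<theta>) fstar s) < \<top>"
    and t: "0 < t" "t < 1"
    and \<delta>_pos: "\<delta> > 0"
    and minimax: "(INF fh\<in>estimators K n. SUP (fstar, \<theta>)\<in>F \<times> \<Theta>.
        emeasure (sample_law n (D fstar \<theta>))
          {\<omega> \<in> space (sample_law n (D fstar \<theta>)).
             risk K w (D fstar \<theta>) fstar (fh \<omega>) \<ge> ennreal \<delta>}) \<ge> ennreal t"
  shows "\<forall>\<alpha> t'. 0 \<le> \<alpha> \<and> \<alpha> \<le> 1 \<and> 0 < t' \<and> t' < 1 \<longrightarrow>
    (INF fh\<in>valid_estimators K w n F \<Theta> D \<alpha> t'. SUP (fstar, \<theta>)\<in>F \<times> \<Theta>.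
        emeasure (sample_law n (D fstar \<theta>))
          {\<omega> \<in> space (sample_law n (D fstar \<theta>)).
             ennsqrt (risk K w (D fstar \<theta>) fstar (fh \<omega>)) \<ge>
               max (ennsqrt (ennreal \<delta>))
                   (ennreal (1 - sqrt \<alpha>) * ennsqrt (unfairness K w (D fstar \<theta>) fstar))})
      \<ge> ennreal (min t (1 - t'))"
proof (intro allI impI)
  fix \<alpha> t' :: real
  assume at: "0 \<le> \<alpha> \<and> \<alpha> \<le> 1 \<and> 0 < t' \<and> t' < 1"
  then have a0: "0 \<le> \<alpha>" and a1: "\<alpha> \<le> 1" by auto
  let ?E = "\<lambda>fh fstar \<theta>. {\<omega> \<in> space (sample_law n (D fstar \<theta>)).
             ennsqrt (risk K w (D fstar \<theta>) fstar (fh \<omega>)) \<ge>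
               max (ennsqrt (ennreal \<delta>))
                   (ennreal (1 - sqrt \<alpha>) * ennsqrt (unfairness K w (D fstar \<theta>) fstar))}"
  show "(INF fh\<in>valid_estimators K w n F \<Theta> D \<alpha> t'. SUP (fstar, \<theta>)\<in>F \<times> \<Theta>.
        emeasure (sample_law n (D fstar \<theta>)) (?E fh fstar \<theta>)) \<ge> ennreal (min t (1 - t'))"
  proof (rule INF_greatest)
    fix fh assume fhv: "fh \<in> valid_estimators K w n F \<Theta> D \<alpha> t'"
    have fhe: "fh \<in> estimators K n" using fhv by (simp add: valid_estimators_def)
    have val: "ennreal (1 - t') \<le> (INF (fstar, \<theta>)\<in>F \<times> \<Theta>. emeasure (sample_law n (D fstar \<theta>))
         {\<omega> \<in> space (sample_law n (D fstar \<theta>)).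
            unfairness K w (D fstar \<theta>) (fh \<omega>) \<le> ennreal \<alpha> * unfairness K w (D fstar \<theta>) fstar})"
      using fhv by (simp add: valid_estimators_def)
    show "ennreal (min t (1 - t')) \<le> (SUP (fstar, \<theta>)\<in>F \<times> \<Theta>. emeasure (sample_law n (D fstar \<theta>)) (?E fh fstar \<theta>))"
    proof (cases "\<forall>(fstar, \<theta>)\<in>F \<times> \<Theta>. ennreal (1 - sqrt \<alpha>) * ennsqrt (unfairness K w (D fstar \<theta>) fstar) \<le> ennsqrt (ennreal \<delta>)")
      case True
      have "ennreal (min t (1 - t')) \<le> ennreal t" by (intro ennreal_leI) simp
      also have "\<dots> \<le> (SUP (fstar, \<theta>)\<in>F \<times> \<Theta>.
        emeasure (sample_law n (D fstar \<theta>))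
          {\<omega> \<in> space (sample_law n (D fstar \<theta>)).
             risk K w (D fstar \<theta>) fstar (fh \<omega>) \<ge> ennreal \<delta>})"
        using minimax fhe by (meson INF_lower order_trans)
      also have "\<dots> = (SUP (fstar, \<theta>)\<in>F \<times> \<Theta>. emeasure (sample_law n (D fstar \<theta>)) (?E fh fstar \<theta>))"
      proof (intro SUP_cong refl)
        fix p assume p: "p \<in> F \<times> \<Theta>"
        obtain fstar \<theta> where p2: "p = (fstar, \<theta>)" by (cases p)
        have le: "ennreal (1 - sqrt \<alpha>) * ennsqrt (unfairness K w (D fstar \<theta>) fstar) \<le> ennsqrt (ennreal \<delta>)"
          using True p p2 by auto
        have "{\<omega> \<in> space (sample_law n (D fstar \<theta>)). risk K w (D fstar \<theta>) fstar (fh \<omega>) \<ge> ennreal \<delta>} = ?E fh fstar \<theta>"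
          using le by (simp add: max_absorb1 ennsqrt_le_iff)
        then show "(case p of (fstar, \<theta>) \<Rightarrow> emeasure (sample_law n (D fstar \<theta>))
          {\<omega> \<in> space (sample_law n (D fstar \<theta>)). risk K w (D fstar \<theta>) fstar (fh \<omega>) \<ge> ennreal \<delta>})
          = (case p of (fstar, \<theta>) \<Rightarrow> emeasure (sample_law n (D fstar \<theta>)) (?E fh fstar \<theta>))"
          using p2 by simp
      qed
      finally show ?thesis .
    next
      case False
      then obtain f0 \<theta>0 where p0: "(f0, \<theta>0) \<in> F \<times> \<Theta>"
        and gt: "ennsqrt (ennreal \<delta>) < ennreal (1 - sqrt \<alpha>) * ennsqrt (unfairness K w (D f0 \<theta>0) f0)"
        by (auto simp: not_le)
      let ?D = "D f0 \<theta>0"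
      let ?P = "sample_law n ?D"
      let ?U = "unfairness K w ?D f0"
      have mdl: "prob_space ?D" "sets ?D = sets (obs_space K)"
        "(\<lambda>z. f0 (fst z) (snd z)) \<in> borel_measurable (borel \<Otimes>\<^sub>M count_space {1..K})"
        using model p0 by auto
      have pf: "\<forall>s\<in>{1..K}. prob_space (cond_law K ?D f0 s) \<and> (\<integral>\<^sup>+ x. ennreal (x\<^sup>2) \<partial>cond_law K ?D f0 s) < \<top>"
        using nonatomic p0 by auto
      have pf1: "\<forall>s\<in>{1..K}. prob_space (cond_law K ?D f0 s)" using pf by auto
      note pfacts = param_facts[OF mdl(2) mdl(3) pf1 fhe]
      have alt1: "\<alpha> < 1"
      proof (rule ccontr)
        assume "\<not> \<alpha> < 1"
        then have "\<alpha> = 1" using a1 by simp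
        then show False using gt by simp
      qed
      have Uf: "?U < \<top>" by (rule U_finite[OF pf mdl(3)])
      define A where "A = {\<omega> \<in> space ?P. unfairness K w ?D (fh \<omega>) \<le> ennreal \<alpha> * ?U}"
      have "ennreal (min t (1 - t')) \<le> ennreal (1 - t')" by (intro ennreal_leI) simp
      also have "\<dots> \<le> emeasure ?P A"
        using val INF_lower[OF p0, of "\<lambda>(fstar, \<theta>). emeasure (sample_law n (D fstar \<theta>))
         {\<omega> \<in> space (sample_law n (D fstar \<theta>)).
            unfairness K w (D fstar \<theta>) (fh \<omega>) \<le> ennreal \<alpha> * unfairness K w (D fstar \<theta>) fstar}"]
        unfolding A_def by simp
      also have "\<dots> \<le> emeasure ?P (?E fh f0 \<theta>0)"
      proof (rule emeasure_mono)
        show "A \<subseteq> ?E fh f0 \<theta>0"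
        proof
          fix \<omega> assume \<omega>: "\<omega> \<in> A"
          then have \<omega>s: "\<omega> \<in> space ?P" and ua: "unfairness K w ?D (fh \<omega>) \<le> ennreal \<alpha> * ?U"
            by (auto simp: A_def)
          have gm: "(\<lambda>z. fh \<omega> (fst z) (snd z)) \<in> borel_measurable (borel \<Otimes>\<^sub>M count_space {1..K})"
            using pfacts(1)[OF \<omega>s] .
          have "ennreal (1 - sqrt \<alpha>) * ennsqrt ?U \<le> ennsqrt (risk K w ?D f0 (fh \<omega>))"
            by (rule final_alg[OF Uf a0 alt1 ua key_bound[OF pf1 mdl(3) gm]])
          then show "\<omega> \<in> ?E fh f0 \<theta>0" using gt \<omega>s by auto
        qed
        have rm[measurable]: "(\<lambda>\<omega>. risk K w ?D f0 (fh \<omega>)) \<in> borel_measurable ?P" by (rule pfacts(2))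
        define c where "c = max (ennsqrt (ennreal \<delta>)) (ennreal (1 - sqrt \<alpha>) * ennsqrt ?U)"
        have "?E fh f0 \<theta>0 = {\<omega> \<in> space ?P. c * c \<le> risk K w ?D f0 (fh \<omega>)}"
          unfolding c_def[symmetric] by (simp add: ennsqrt_ge_iff)
        also have "\<dots> \<in> sets ?P" by measurable
        finally show "?E fh f0 \<theta>0 \<in> sets ?P" .
      qed
      also have "\<dots> \<le> (SUP (fstar, \<theta>)\<in>F \<times> \<Theta>. emeasure (sample_law n (D fstar \<theta>)) (?E fh fstar \<theta>))"
        using p0 by (rule SUP_upper2) simp
      finally show ?thesis .
    qed
  qed
qed

end
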